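(* Let $(X,\rho)$ be a metric space, $f:X\to X$ continuous, $x\in X$, $\ell\in\mathbb N$, $n\ge2$ an integer and $\varepsilon>0$. Then \[ \Lambda_\ell(x,n,\varepsilon)=\frac{n}{n-1}\Big[C_\ell(x,n,\varepsilon)-C_{\ell+1}(x,n,\varepsilon)\Big]+\delta^{N}_\ell,\qquad |\delta^N_\ell|\le\frac{2\ell}{n}. \] Consequently, if $\Lambda_\ell(x,n,\varepsilon)>0$, then, with $\delta^{\mathrm{RR}}_\ell$ satisfying $|\delta^{\mathrm{RR}}_\ell|\le 2\ell(\ell-1)/n$, \[ \mathrm{L}_\ell(x,n,\varepsilon)=\frac{\frac{n}{n-1}\big[\ell C_\ell-(\ell-1)C_{\ell+1}\big]-\frac1{n-1}+\delta^{\mathrm{RR}}_\ell}{\frac{n}{n-1}\big[C_\ell-C_{\ell+1}\big]+\delta^N_\ell}, \] where $C_\ell=C_\ell(x,n,\varepsilon)$ and $C_{\ell+1}=C_{\ell+1}(x,n,\varepsilon)$.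
   Context: Bowen metric $\rho_\ell(y,z)=\max_{0\le i<\ell}\rho(f^iy,f^iz)$; correlation sum $C_\ell(x,n,\varepsilon)=n^{-2}\#\{(i,j):0\le i,j<n,\ \rho_\ell(f^ix,f^jx)\le\varepsilon\}$. Recurrence plot $R(x,n,\varepsilon)$: $n\times n$ matrix ($0\le i,j<n$) with entry $1$ iff $\rho(f^ix,f^jx)\le\varepsilon$. A line of length $\ell$: triple $(i,j,\ell)$ with $0\le i,j\le n-\ell$, $i\ne j$, entries $(i+k,j+k)=1$ for $0\le k<\ell$, entry $(i-1,j-1)=0$ if $\min\{i,j\}>0$, entry $(i+\ell,j+\ell)=0$ if $\max\{i,j\}<n-\ell$. $N_l$ = number of lines of length exactly $l$ (boundary lines included), $\lambda_l=N_l/(n^2-n)$, $\Lambda_\ell=\sum_{l\ge\ell}\lambda_l$, $\mathrm{RR}_\ell=\sum_{l\ge\ell}l\lambda_l$, average line length $\mathrm{L}_\ell=\mathrm{RR}_\ell/\Lambda_\ell$. *)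

theory Defs
  imports "HOL-Analysis.Analysis"
begin

text \<open>Bowen metric rho_l(y,z) = max_{0 <= i < l} dist (f^i y) (f^i z)  (meaningful for l >= 1).\<close>
definition bowen_dist :: "('a::metric_space \<Rightarrow> 'a) \<Rightarrow> nat \<Rightarrow> 'a \<Rightarrow> 'a \<Rightarrow> real" where
  "bowen_dist f l y z = Max ((\<lambda>i. dist ((f ^^ i) y) ((f ^^ i) z)) ` {..<l})"

definition corr_sum :: "('a::metric_space \<Rightarrow> 'a) \<Rightarrow> nat \<Rightarrow> 'a \<Rightarrow> nat \<Rightarrow> real \<Rightarrow> real" where
  "corr_sum f l x n \<epsilon> =
     real (card {(i, j). i < n \<and> j < n \<and> bowen_dist f l ((f ^^ i) x) ((f ^^ j) x) \<le> \<epsilon>})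
     / (real n) ^ 2"

definition rplot :: "('a::metric_space \<Rightarrow> 'a) \<Rightarrow> 'a \<Rightarrow> real \<Rightarrow> nat \<Rightarrow> nat \<Rightarrow> bool" where
  "rplot f x \<epsilon> i j \<longleftrightarrow> dist ((f ^^ i) x) ((f ^^ j) x) \<le> \<epsilon>"

definition is_line :: "('a::metric_space \<Rightarrow> 'a) \<Rightarrow> 'a \<Rightarrow> nat \<Rightarrow> real \<Rightarrow> nat \<Rightarrow> nat \<Rightarrow> nat \<Rightarrow> bool" where
  "is_line f x n \<epsilon> i j l \<longleftrightarrow>
     i + l \<le> n \<and> j + l \<le> n \<and> i \<noteq> j \<and>
     (\<forall>k<l. rplot f x \<epsilon> (i + k) (j + k)) \<and>
     (min i j > 0 \<longrightarrow> \<not> rplot f x \<epsilon> (i - 1) (j - 1)) \<and>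
     (max i j < n - l \<longrightarrow> \<not> rplot f x \<epsilon> (i + l) (j + l))"

definition num_lines :: "('a::metric_space \<Rightarrow> 'a) \<Rightarrow> 'a \<Rightarrow> nat \<Rightarrow> real \<Rightarrow> nat \<Rightarrow> nat" where
  "num_lines f x n \<epsilon> l = card {(i, j). i \<le> n \<and> j \<le> n \<and> is_line f x n \<epsilon> i j l}"

definition line_freq :: "('a::metric_space \<Rightarrow> 'a) \<Rightarrow> 'a \<Rightarrow> nat \<Rightarrow> real \<Rightarrow> nat \<Rightarrow> real" where
  "line_freq f x n \<epsilon> l = real (num_lines f x n \<epsilon> l) / ((real n) ^ 2 - real n)"

text \<open>Lambda_l = sum_{l' >= l} lambda_{l'}.  Lines have length at most n, so the
  sum over l' >= l equals the finite sum over l <= l' <= n.\<close>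
definition Lam :: "('a::metric_space \<Rightarrow> 'a) \<Rightarrow> nat \<Rightarrow> 'a \<Rightarrow> nat \<Rightarrow> real \<Rightarrow> real" where
  "Lam f l x n \<epsilon> = (\<Sum>l'\<in>{l..n}. line_freq f x n \<epsilon> l')"

definition RR :: "('a::metric_space \<Rightarrow> 'a) \<Rightarrow> nat \<Rightarrow> 'a \<Rightarrow> nat \<Rightarrow> real \<Rightarrow> real" where
  "RR f l x n \<epsilon> = (\<Sum>l'\<in>{l..n}. real l' * line_freq f x n \<epsilon> l')"

definition avg_len :: "('a::metric_space \<Rightarrow> 'a) \<Rightarrow> nat \<Rightarrow> 'a \<Rightarrow> nat \<Rightarrow> real \<Rightarrow> real" where
  "avg_len f l x n \<epsilon> = RR f l x n \<epsilon> / Lam f l x n \<epsilon>"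

end

theory Submission
  imports Defs
begin

definition good :: "('a::metric_space \<Rightarrow> 'a) \<Rightarrow> 'a \<Rightarrow> real \<Rightarrow> nat \<Rightarrow> nat \<Rightarrow> nat \<Rightarrow> bool" where
  "good f x \<epsilon> m i j \<longleftrightarrow> (\<forall>k<m. rplot f x \<epsilon> (i+k) (j+k))"

definition Aset :: "('a::metric_space \<Rightarrow> 'a) \<Rightarrow> 'a \<Rightarrow> nat \<Rightarrow> real \<Rightarrow> nat \<Rightarrow> (nat \<times> nat) set" where
  "Aset f x n \<epsilon> m = {(i,j). i+m \<le> n \<and> j+m \<le> n \<and> i \<noteq> j \<and> good f x \<epsilon> m i j}"

definition Eset :: "('a::metric_space \<Rightarrow> 'a) \<Rightarrow> 'a \<Rightarrow> nat \<Rightarrow> real \<Rightarrow> nat \<Rightarrow> (nat \<times> nat) set" where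
  "Eset f x n \<epsilon> m = {(i,j). i<n \<and> j<n \<and> i\<noteq>j \<and> \<not>(i+m \<le> n \<and> j+m \<le> n) \<and> good f x \<epsilon> m i j}"

lemma finite_Aset: "finite (Aset f x n \<epsilon> m)"
  by (rule finite_subset[of _ "{..n} \<times> {..n}"]) (auto simp: Aset_def)
lemma finite_Eset: "finite (Eset f x n \<epsilon> m)"
  by (rule finite_subset[of _ "{..<n} \<times> {..<n}"]) (auto simp: Eset_def)

lemma bowen_good:
  assumes "1 \<le> m"
  shows "bowen_dist f m ((f^^i) x) ((f^^j) x) \<le> \<epsilon> \<longleftrightarrow> good f x \<epsilon> m i j"
proof -
  have e: "(f^^k) ((f^^i) x) = (f^^(i+k)) x" for k i
    by (metis comp_apply funpow_add add.commute)
  have ne: "{..<m} \<noteq> {}" using assms by (cases m) auto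
  have "Max ((\<lambda>i'. dist ((f ^^ i') ((f^^i) x)) ((f ^^ i') ((f^^j) x))) ` {..<m}) \<le> \<epsilon>
     \<longleftrightarrow> (\<forall>a\<in>(\<lambda>i'. dist ((f ^^ i') ((f^^i) x)) ((f ^^ i') ((f^^j) x))) ` {..<m}. a \<le> \<epsilon>)"
    by (rule Max_le_iff) (use ne in auto)
  then show ?thesis unfolding bowen_dist_def good_def rplot_def by (auto simp: e)
qed

lemma corr_card:
  assumes "1 \<le> m" "\<epsilon> \<ge> 0"
  shows "card {(i, j). i < n \<and> j < n \<and> bowen_dist f m ((f ^^ i) x) ((f ^^ j) x) \<le> \<epsilon>}
         = n + card (Aset f x n \<epsilon> m) + card (Eset f x n \<epsilon> m)"
proof -
  let ?D = "(\<lambda>i. (i,i)) ` {..<n}"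
  have S: "{(i, j). i < n \<and> j < n \<and> bowen_dist f m ((f ^^ i) x) ((f ^^ j) x) \<le> \<epsilon>}
     = ?D \<union> (Aset f x n \<epsilon> m \<union> Eset f x n \<epsilon> m)"
    using assms by (auto simp: bowen_good Aset_def Eset_def good_def rplot_def)
  have "card (?D \<union> (Aset f x n \<epsilon> m \<union> Eset f x n \<epsilon> m)) = card ?D + card (Aset f x n \<epsilon> m \<union> Eset f x n \<epsilon> m)"
    using finite_Aset[of f x n \<epsilon> m] finite_Eset[of f x n \<epsilon> m]
    by (intro card_Un_disjoint) (auto simp: Aset_def Eset_def)
  also have "card (Aset f x n \<epsilon> m \<union> Eset f x n \<epsilon> m) = card (Aset f x n \<epsilon> m) + card (Eset f x n \<epsilon> m)"
    using finite_Aset[of f x n \<epsilon> m] finite_Eset[of f x n \<epsilon> m]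
    by (intro card_Un_disjoint) (auto simp: Aset_def Eset_def)
  also have "card ?D = n" by (subst card_image) (auto simp: inj_on_def)
  finally show ?thesis using S by simp
qed

lemma good_Suc: "good f x \<epsilon> (Suc m) i j \<longleftrightarrow> rplot f x \<epsilon> i j \<and> good f x \<epsilon> m (Suc i) (Suc j)"
  unfolding good_def by (auto simp: less_Suc_eq_0_disj)

lemma line_unique:
  assumes "is_line f x n \<epsilon> i j L1" "is_line f x n \<epsilon> i j L2" shows "L1 = L2"
proof -
  have "\<not> L1 < L2" if a: "is_line f x n \<epsilon> i j L1" "is_line f x n \<epsilon> i j L2" for L1 L2
  proof
    assume l: "L1 < L2"
    have r: "rplot f x \<epsilon> (i+L1) (j+L1)" using a(2) l unfolding is_line_def by blast
    have "max i j < n - L1" using a(2) l unfolding is_line_def by auto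
    then show False using a(1) r unfolding is_line_def by blast
  qed
  then show ?thesis using assms by (meson linorder_neqE_nat)
qed

definition St :: "('a::metric_space \<Rightarrow> 'a) \<Rightarrow> 'a \<Rightarrow> nat \<Rightarrow> real \<Rightarrow> nat \<Rightarrow> (nat \<times> nat) set" where
  "St f x n \<epsilon> m = {(i,j). i+m \<le> n \<and> j+m \<le> n \<and> i \<noteq> j \<and> good f x \<epsilon> m i j
        \<and> (0 < i \<and> 0 < j \<longrightarrow> \<not> rplot f x \<epsilon> (i-1) (j-1))}"

lemma lines_St:
  assumes "1 \<le> m"
  shows "{(i,j). \<exists>L\<in>{m..n}. i \<le> n \<and> j \<le> n \<and> is_line f x n \<epsilon> i j L} = St f x n \<epsilon> m"
proof
  show "{(i,j). \<exists>L\<in>{m..n}. i \<le> n \<and> j \<le> n \<and> is_line f x n \<epsilon> i j L} \<subseteq> St f x n \<epsilon> m"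
    unfolding St_def is_line_def good_def by auto
next
  show "St f x n \<epsilon> m \<subseteq> {(i,j). \<exists>L\<in>{m..n}. i \<le> n \<and> j \<le> n \<and> is_line f x n \<epsilon> i j L}"
  proof clarify
    fix i j assume s: "(i,j) \<in> St f x n \<epsilon> m"
    define W where "W = {L. i+L \<le> n \<and> j+L \<le> n \<and> good f x \<epsilon> L i j}"
    have fW: "finite W" by (rule finite_subset[of _ "{..n}"]) (auto simp: W_def)
    have mW: "m \<in> W" using s by (auto simp: W_def St_def)
    define L0 where "L0 = Max W"
    have L0W: "L0 \<in> W" unfolding L0_def using fW mW by (intro Max_in) auto
    have mL0: "m \<le> L0" unfolding L0_def using fW mW by (intro Max_ge)
    have notS: "Suc L0 \<notin> W"
    proof
      assume "Suc L0 \<in> W"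
      then have "Suc L0 \<le> L0" unfolding L0_def using fW by (intro Max_ge)
      then show False by simp
    qed
    have "is_line f x n \<epsilon> i j L0"
      unfolding is_line_def
    proof (intro conjI impI)
      show "i + L0 \<le> n" "j + L0 \<le> n" "\<forall>k<L0. rplot f x \<epsilon> (i + k) (j + k)"
        using L0W by (auto simp: W_def good_def)
      show "i \<noteq> j" using s by (auto simp: St_def)
      show "\<not> rplot f x \<epsilon> (i - 1) (j - 1)" if "0 < min i j" using s that by (auto simp: St_def)
      show "\<not> rplot f x \<epsilon> (i + L0) (j + L0)" if "max i j < n - L0"
      proof
        assume r: "rplot f x \<epsilon> (i + L0) (j + L0)"
        have "good f x \<epsilon> (Suc L0) i j" using L0W r unfolding W_def good_def
          by (auto simp: less_Suc_eq)
        moreover have "i + Suc L0 \<le> n" "j + Suc L0 \<le> n" using that by auto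
        ultimately have "Suc L0 \<in> W" by (auto simp: W_def)
        then show False using notS by simp
      qed
    qed
    moreover have "L0 \<le> n" using L0W by (auto simp: W_def)
    ultimately show "\<exists>L\<in>{m..n}. i \<le> n \<and> j \<le> n \<and> is_line f x n \<epsilon> i j L"
      using mL0 L0W by (intro bexI[of _ L0]) (auto simp: W_def)
  qed
qed


lemma fin_le: "finite {(i,j). i \<le> (n::nat) \<and> j \<le> n \<and> P i j}"
  by (rule finite_subset[of _ "{..n} \<times> {..n}"]) auto

lemma sum_lines:
  assumes "1 \<le> m"
  shows "(\<Sum>L\<in>{m..n}. num_lines f x n \<epsilon> L) + card (Aset f x n \<epsilon> (Suc m)) = card (Aset f x n \<epsilon> m)"
proof -
  have U: "(\<Union>L\<in>{m..n}. {(i,j). i \<le> n \<and> j \<le> n \<and> is_line f x n \<epsilon> i j L})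
     = {(i,j). \<exists>L\<in>{m..n}. i \<le> n \<and> j \<le> n \<and> is_line f x n \<epsilon> i j L}" by auto
  have dis: "\<forall>L1\<in>{m..n}. \<forall>L2\<in>{m..n}. L1 \<noteq> L2 \<longrightarrow>
      {(i,j). i \<le> n \<and> j \<le> n \<and> is_line f x n \<epsilon> i j L1} \<inter> {(i,j). i \<le> n \<and> j \<le> n \<and> is_line f x n \<epsilon> i j L2} = {}"
    using line_unique by blast
  have "(\<Sum>L\<in>{m..n}. num_lines f x n \<epsilon> L) = card (\<Union>L\<in>{m..n}. {(i,j). i \<le> n \<and> j \<le> n \<and> is_line f x n \<epsilon> i j L})"
    unfolding num_lines_def
    by (rule card_UN_disjoint[symmetric]) (use dis fin_le in auto)
  also have "\<dots> = card (St f x n \<epsilon> m)" unfolding U lines_St[OF assms] by (rule refl)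
  finally have T: "(\<Sum>L\<in>{m..n}. num_lines f x n \<epsilon> L) = card (St f x n \<epsilon> m)" .
  define NS where "NS = {(i,j). i+m \<le> n \<and> j+m \<le> n \<and> i \<noteq> j \<and> good f x \<epsilon> m i j \<and> 0 < i \<and> 0 < j \<and> rplot f x \<epsilon> (i-1) (j-1)}"
  have A: "Aset f x n \<epsilon> m = St f x n \<epsilon> m \<union> NS" by (auto simp: Aset_def St_def NS_def)
  have NSI: "NS = (\<lambda>(i,j). (Suc i, Suc j)) ` Aset f x n \<epsilon> (Suc m)"
  proof
    show "(\<lambda>(i,j). (Suc i, Suc j)) ` Aset f x n \<epsilon> (Suc m) \<subseteq> NS" by (auto simp: Aset_def NS_def good_Suc)
    show "NS \<subseteq> (\<lambda>(i,j). (Suc i, Suc j)) ` Aset f x n \<epsilon> (Suc m)"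
    proof clarify
      fix i j assume a: "(i,j) \<in> NS"
      then have "(i-1, j-1) \<in> Aset f x n \<epsilon> (Suc m)" by (auto simp: NS_def Aset_def good_Suc)
      moreover have "(i,j) = (Suc (i-1), Suc (j-1))" using a by (auto simp: NS_def)
      ultimately show "(i,j) \<in> (\<lambda>(i,j). (Suc i, Suc j)) ` Aset f x n \<epsilon> (Suc m)"
        by (metis (no_types, lifting) case_prod_conv image_eqI)
    qed
  qed
  have cNS: "card NS = card (Aset f x n \<epsilon> (Suc m))" unfolding NSI
    by (rule card_image) (auto simp: inj_on_def)
  have fA: "finite (St f x n \<epsilon> m)" "finite NS" using finite_Aset[of f x n \<epsilon> m] A by auto
  have "card (Aset f x n \<epsilon> m) = card (St f x n \<epsilon> m) + card NS"
    unfolding A by (rule card_Un_disjoint) (use fA in \<open>auto simp: St_def NS_def\<close>)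
  then show ?thesis using T cNS by simp
qed

lemma Aset_big: "n < m \<Longrightarrow> Aset f x n \<epsilon> m = {}" by (auto simp: Aset_def)

lemma sum_RR:
  assumes "1 \<le> m"
  shows "(\<Sum>L\<in>{m..n}. real L * real (num_lines f x n \<epsilon> L))
        = real m * card (Aset f x n \<epsilon> m) - (real m - 1) * card (Aset f x n \<epsilon> (Suc m))"
proof (cases "m \<le> Suc n")
  case True
  then show ?thesis
  proof (induction rule: inc_induct)
    case base
    then show ?case by (simp add: Aset_big)
  next
    case (step k)
    have k1: "1 \<le> k" using step assms by simp
    have kn: "k \<le> n" using step by simp
    define T where "T = (\<lambda>m. (\<Sum>L\<in>{m..n}. num_lines f x n \<epsilon> L))"
    define a where "a = (\<lambda>m. card (Aset f x n \<epsilon> m))"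
    have K0: "T k + a (Suc k) = a k" using sum_lines[OF k1] by (simp add: T_def a_def)
    have K1: "T (Suc k) + a (Suc (Suc k)) = a (Suc k)" using sum_lines[of "Suc k"] by (simp add: T_def a_def)
    have TS: "T k = num_lines f x n \<epsilon> k + T (Suc k)" unfolding T_def by (rule sum.atLeast_Suc_atMost[OF kn])
    have Nk: "real (num_lines f x n \<epsilon> k) = real (a k) - 2 * real (a (Suc k)) + real (a (Suc (Suc k)))"
    proof -
      have "real (T k) + real (a (Suc k)) = real (a k)" using K0 by (metis of_nat_add)
      moreover have "real (T (Suc k)) + real (a (Suc (Suc k))) = real (a (Suc k))" using K1 by (metis of_nat_add)
      moreover have "real (T k) = real (num_lines f x n \<epsilon> k) + real (T (Suc k))" using TS by simp
      ultimately show ?thesis by linarith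
    qed
    have "(\<Sum>L\<in>{k..n}. real L * real (num_lines f x n \<epsilon> L))
        = real k * real (num_lines f x n \<epsilon> k) + (\<Sum>L\<in>{Suc k..n}. real L * real (num_lines f x n \<epsilon> L))"
      by (rule sum.atLeast_Suc_atMost[OF kn])
    also have "\<dots> = real k * real (num_lines f x n \<epsilon> k) + (real (Suc k) * a (Suc k) - (real (Suc k) - 1) * a (Suc (Suc k)))"
      using step.IH by (simp add: a_def)
    also have "\<dots> = real k * a k - (real k - 1) * a (Suc k)"
      unfolding Nk by (simp add: algebra_simps)
    finally show ?case by (simp add: a_def)
  qed
next
  case False
  then show ?thesis by (simp add: Aset_big)
qed

lemma card_region1: "card {(i,j). i<n \<and> j<(n::nat) \<and> i\<noteq>j \<and> P i} \<le> card {i. i<n \<and> P i} * (n-1)"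
proof -
  have "{(i,j). i<n \<and> j<n \<and> i\<noteq>j \<and> P i} = Sigma {i. i<n \<and> P i} (\<lambda>i. {..<n} - {i})" by auto
  also have "card \<dots> = (\<Sum>i\<in>{i. i<n \<and> P i}. card ({..<n} - {i}))" by (rule card_SigmaI) auto
  also have "\<dots> = (\<Sum>i\<in>{i. i<n \<and> P i}. n - 1)" by (rule sum.cong) auto
  finally show ?thesis by simp
qed

lemma card_region2: "card {(i,j). i<n \<and> j<(n::nat) \<and> i\<noteq>j \<and> P j} \<le> card {i. i<n \<and> P i} * (n-1)"
proof -
  have sub: "{(i,j). i<n \<and> j<n \<and> i\<noteq>j \<and> P j} \<subseteq> prod.swap ` {(i,j). i<n \<and> j<(n::nat) \<and> i\<noteq>j \<and> P i}"
  proof clarify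
    fix i j assume "i < n" "j < n" "i \<noteq> j" "P j"
    then show "(i, j) \<in> prod.swap ` {(i,j). i<n \<and> j<(n::nat) \<and> i\<noteq>j \<and> P i}"
      by (intro image_eqI[of _ _ "(j,i)"]) auto
  qed
  have fin: "finite {(i,j). i<n \<and> j<(n::nat) \<and> i\<noteq>j \<and> P i}"
    by (rule finite_subset[of _ "{..<n} \<times> {..<n}"]) auto
  have "card {(i,j). i<n \<and> j<n \<and> i\<noteq>j \<and> P j} \<le> card (prod.swap ` {(i,j). i<n \<and> j<(n::nat) \<and> i\<noteq>j \<and> P i})"
    by (rule card_mono[OF finite_imageI[OF fin] sub])
  also have "\<dots> \<le> card {(i,j). i<n \<and> j<(n::nat) \<and> i\<noteq>j \<and> P i}"
    by (rule card_image_le[OF fin])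
  finally show ?thesis using card_region1[of n P] by linarith
qed

lemma card_region:
  assumes "\<And>i j. Q i j \<Longrightarrow> P i \<or> P j"
  shows "card {(i,j). i<n \<and> j<(n::nat) \<and> i\<noteq>j \<and> Q i j} \<le> 2 * (card {i. i<n \<and> P i} * (n-1))"
proof -
  have "{(i,j). i<n \<and> j<(n::nat) \<and> i\<noteq>j \<and> Q i j} \<subseteq>
      {(i,j). i<n \<and> j<(n::nat) \<and> i\<noteq>j \<and> P i} \<union> {(i,j). i<n \<and> j<(n::nat) \<and> i\<noteq>j \<and> P j}"
    using assms by auto
  then have "card {(i,j). i<n \<and> j<(n::nat) \<and> i\<noteq>j \<and> Q i j} \<le>
      card ({(i,j). i<n \<and> j<(n::nat) \<and> i\<noteq>j \<and> P i} \<union> {(i,j). i<n \<and> j<(n::nat) \<and> i\<noteq>j \<and> P j})"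
    by (rule card_mono[rotated]) (rule finite_subset[of _ "{..<n} \<times> {..<n}"], auto)
  also have "\<dots> \<le> card {(i,j). i<n \<and> j<(n::nat) \<and> i\<noteq>j \<and> P i} + card {(i,j). i<n \<and> j<(n::nat) \<and> i\<noteq>j \<and> P j}"
    by (rule card_Un_le)
  finally show ?thesis using card_region1[of n P] card_region2[of n P] by linarith
qed

lemma Eset_bound: "card (Eset f x n \<epsilon> m) \<le> 2 * ((m - 1) * (n - 1))"
proof -
  have "card (Eset f x n \<epsilon> m) \<le> card {(i,j). i<n \<and> j<(n::nat) \<and> i\<noteq>j \<and> \<not>(i+m \<le> n \<and> j+m \<le> n)}"
    by (rule card_mono) (rule finite_subset[of _ "{..<n} \<times> {..<n}"], auto simp: Eset_def)
  also have "\<dots> \<le> 2 * (card {i. i<n \<and> n < i + m} * (n-1))"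
    by (rule card_region) auto
  also have "card {i. i<n \<and> n < i + m} \<le> m - 1"
  proof -
    have "card {i. i<n \<and> n < i + m} \<le> card {Suc n - m..<n}" by (rule card_mono) auto
    then show ?thesis by simp
  qed
  then have "2 * (card {i. i<n \<and> n < i + m} * (n-1)) \<le> 2 * ((m - 1) * (n - 1))" by simp
  finally show ?thesis .
qed

lemma Eset_Suc: "card (Eset f x n \<epsilon> (Suc m)) \<le> card (Eset f x n \<epsilon> m) + 2 * (n - 1)"
proof -
  let ?M = "{(i,j). i<n \<and> j<(n::nat) \<and> i\<noteq>j \<and> (i+m = n \<or> j+m = n)}"
  have "Eset f x n \<epsilon> (Suc m) \<subseteq> Eset f x n \<epsilon> m \<union> ?M"
    by (auto simp: Eset_def good_def)
  then have "card (Eset f x n \<epsilon> (Suc m)) \<le> card (Eset f x n \<epsilon> m \<union> ?M)"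
    by (rule card_mono[rotated]) (rule finite_subset[of _ "{..<n} \<times> {..<n}"], auto simp: Eset_def)
  also have "\<dots> \<le> card (Eset f x n \<epsilon> m) + card ?M" by (rule card_Un_le)
  also have "card ?M \<le> 2 * (card {i. i<n \<and> i + m = n} * (n-1))"
    by (rule card_region) auto
  also have "card {i. i<n \<and> i + m = n} \<le> 1"
  proof -
    have "card {i. i<n \<and> i + m = n} \<le> card {n - m}" by (rule card_mono) auto
    then show ?thesis by simp
  qed
  then have "2 * (card {i. i<n \<and> i + m = n} * (n-1)) \<le> 2 * (n - 1)" by simp
  finally show ?thesis by simp
qed

theorem mainTheorem8:
  fixes f :: "'a::metric_space \<Rightarrow> 'a" and x :: 'a and l n :: nat and \<epsilon> :: real
  assumes "continuous_on UNIV f"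
    and "l \<ge> 1"
    and "n \<ge> 2"
    and "\<epsilon> > 0"
  shows "\<exists>\<delta>N. Lam f l x n \<epsilon> =
              real n / (real n - 1) * (corr_sum f l x n \<epsilon> - corr_sum f (l + 1) x n \<epsilon>) + \<delta>N
            \<and> \<bar>\<delta>N\<bar> \<le> 2 * real l / real n
            \<and> (Lam f l x n \<epsilon> > 0 \<longrightarrow>
                 (\<exists>\<delta>RR. \<bar>\<delta>RR\<bar> \<le> 2 * real l * (real l - 1) / real n
                   \<and> avg_len f l x n \<epsilon> =
                      (real n / (real n - 1) * (real l * corr_sum f l x n \<epsilon>
                           - (real l - 1) * corr_sum f (l + 1) x n \<epsilon>)
                        - 1 / (real n - 1) + \<delta>RR)
                      / (real n / (real n - 1) * (corr_sum f l x n \<epsilon> - corr_sum f (l + 1) x n \<epsilon>)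
                        + \<delta>N)))"
proof -
  define N where "N = real n"
  define L where "L = real l"
  have N2: "N \<ge> 2" using assms by (simp add: N_def)
  have L1: "L \<ge> 1" using assms by (simp add: L_def)
  define a0 where "a0 = real (card (Aset f x n \<epsilon> l))"
  define a1 where "a1 = real (card (Aset f x n \<epsilon> (Suc l)))"
  define e0 where "e0 = real (card (Eset f x n \<epsilon> l))"
  define e1 where "e1 = real (card (Eset f x n \<epsilon> (Suc l)))"
  have eps0: "\<epsilon> \<ge> 0" using assms by simp
  have c0: "corr_sum f l x n \<epsilon> = (N + a0 + e0) / N^2"
    using corr_card[OF assms(2) eps0, of n f x] unfolding corr_sum_def
    by (simp add: N_def a0_def e0_def)
  have c1: "corr_sum f (l+1) x n \<epsilon> = (N + a1 + e1) / N^2"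
    using corr_card[of "l+1" \<epsilon> n f x] eps0 unfolding corr_sum_def
    by (simp add: N_def a1_def e1_def)
  have T: "(\<Sum>L\<in>{l..n}. num_lines f x n \<epsilon> L) + card (Aset f x n \<epsilon> (Suc l)) = card (Aset f x n \<epsilon> l)"
    using sum_lines[OF assms(2)] .
  have Treal: "real (\<Sum>L\<in>{l..n}. num_lines f x n \<epsilon> L) = a0 - a1"
    using arg_cong[OF T, of real] unfolding a0_def a1_def of_nat_add by linarith
  have Lam: "Lam f l x n \<epsilon> = (a0 - a1) / (N^2 - N)"
    unfolding Lam_def line_freq_def sum_divide_distrib[symmetric] of_nat_sum[symmetric] Treal
    by (simp add: N_def)
  have RR: "RR f l x n \<epsilon> = (L * a0 - (L - 1) * a1) / (N^2 - N)"
  proof -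
    have "RR f l x n \<epsilon> = (\<Sum>L\<in>{l..n}. real L * real (num_lines f x n \<epsilon> L)) / (N^2 - N)"
      unfolding RR_def line_freq_def sum_divide_distrib by (simp add: N_def)
    then show ?thesis using sum_RR[OF assms(2), where n=n and f=f and x=x and \<epsilon>=\<epsilon>] by (simp add: L_def a0_def a1_def)
  qed
  define p where "p = (L - 1) * (N - 1)"
  have p0: "p \<ge> 0" using L1 N2 by (simp add: p_def)
  have e0b: "e0 \<le> 2 * p"
  proof -
    have "real (card (Eset f x n \<epsilon> l)) \<le> real (2 * ((l - 1) * (n - 1)))"
      using Eset_bound[of f x n \<epsilon> l] by linarith
    then show ?thesis using assms by (simp add: e0_def p_def L_def N_def of_nat_diff)
  qed
  have e1b: "e1 \<le> 2 * L * (N - 1)"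
  proof -
    have "real (card (Eset f x n \<epsilon> (Suc l))) \<le> real (2 * ((Suc l - 1) * (n - 1)))"
      using Eset_bound[of f x n \<epsilon> "Suc l"] by linarith
    then show ?thesis using assms by (simp add: e1_def L_def N_def of_nat_diff)
  qed
  have e10: "e1 \<le> e0 + 2 * (N - 1)"
  proof -
    have "real (card (Eset f x n \<epsilon> (Suc l))) \<le> real (card (Eset f x n \<epsilon> l) + 2 * (n - 1))"
      using Eset_Suc[of f x n \<epsilon> l] by linarith
    then show ?thesis using assms by (simp add: e1_def e0_def N_def of_nat_diff)
  qed
  have e0p: "e0 \<ge> 0" "e1 \<ge> 0" by (simp_all add: e0_def e1_def)
  have NN: "N^2 - N = N * (N - 1)" by (simp add: power2_eq_square algebra_simps)
  have Npos: "N * (N - 1) > 0" using N2 by simp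
  define dN where "dN = Lam f l x n \<epsilon> - N / (N - 1) * (corr_sum f l x n \<epsilon> - corr_sum f (l+1) x n \<epsilon>)"
  have dN_eq: "dN = (e1 - e0) / (N * (N - 1))"
  proof -
    have nz: "N \<noteq> 0" "N - 1 \<noteq> 0" using N2 by auto
    have "N / (N - 1) * ((N + a0 + e0) / N^2 - (N + a1 + e1) / N^2) = (a0 - a1 + e0 - e1) / (N * (N - 1))"
      using nz by (simp add: field_simps power2_eq_square)
    then show ?thesis unfolding dN_def Lam c0 c1 NN by (simp add: diff_divide_distrib[symmetric])
  qed
  have pL: "2 * p \<le> 2 * L * (N - 1)" using N2 by (simp add: p_def algebra_simps)
  have "\<bar>e1 - e0\<bar> \<le> 2 * L * (N - 1)" using e0b e1b e0p pL by linarith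
  then have dNb: "\<bar>dN\<bar> \<le> 2 * L / N"
  proof -
    assume h: "\<bar>e1 - e0\<bar> \<le> 2 * L * (N - 1)"
    have "\<bar>dN\<bar> = \<bar>e1 - e0\<bar> / (N * (N - 1))" unfolding dN_eq using Npos by simp
    also have "\<dots> \<le> 2 * L * (N - 1) / (N * (N - 1))" using h Npos by (intro divide_right_mono) auto
    also have "\<dots> = 2 * L / N" using N2 by (simp add: field_simps)
    finally show ?thesis .
  qed
  define dRR where "dRR = RR f l x n \<epsilon> - (N / (N - 1) * (L * corr_sum f l x n \<epsilon> - (L - 1) * corr_sum f (l+1) x n \<epsilon>) - 1 / (N - 1))"
  have dRR_eq: "dRR = - (L * e0 - (L - 1) * e1) / (N * (N - 1))"
  proof -
    have nz: "N \<noteq> 0" "N - 1 \<noteq> 0" using N2 by auto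
    have "N / (N - 1) * (L * ((N + a0 + e0) / N^2) - (L - 1) * ((N + a1 + e1) / N^2)) - 1 / (N - 1)
        = (L * a0 - (L - 1) * a1 + L * e0 - (L - 1) * e1) / (N * (N - 1))"
    proof -
      define S where "S = L * (N + a0 + e0) - (L - 1) * (N + a1 + e1)"
      have h1: "L * ((N + a0 + e0) / N^2) - (L - 1) * ((N + a1 + e1) / N^2) = S / N^2"
        unfolding S_def by (simp add: diff_divide_distrib)
      have h2: "N / (N - 1) * (S / N^2) = S / (N * (N - 1))" using nz by (simp add: power2_eq_square)
      have h3: "1 / (N - 1) = N / (N * (N - 1))" using nz by simp
      have h4: "S - N = L * a0 - (L - 1) * a1 + L * e0 - (L - 1) * e1" unfolding S_def by (simp add: algebra_simps)
      show ?thesis unfolding h1 h2 h3 h4[symmetric] by (simp add: diff_divide_distrib)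
    qed
    then show ?thesis unfolding dRR_def RR c0 c1 NN by (simp add: diff_divide_distrib[symmetric])
  qed
  have m1: "(L - 1) * e1 \<ge> 0" using L1 e0p by simp
  have m2: "L * e0 \<le> L * (2 * p)" using L1 e0b by (intro mult_left_mono) auto
  have m3: "(L - 1) * e1 \<le> (L - 1) * (e0 + 2 * (N - 1))" using L1 e10 by (intro mult_left_mono) auto
  have m4: "p \<le> L * p" using mult_right_mono[OF L1 p0] by simp
  have id1: "(L - 1) * (e0 + 2 * (N - 1)) = L * e0 - e0 + 2 * p" by (simp add: p_def algebra_simps)
  have "\<bar>L * e0 - (L - 1) * e1\<bar> \<le> 2 * L * p" using m1 m2 m3 m4 id1 e0p by (simp add: abs_le_iff algebra_simps) 
  then have dRRb: "\<bar>dRR\<bar> \<le> 2 * L * (L - 1) / N"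
  proof -
    assume h: "\<bar>L * e0 - (L - 1) * e1\<bar> \<le> 2 * L * p"
    have "\<bar>dRR\<bar> = \<bar>L * e0 - (L - 1) * e1\<bar> / (N * (N - 1))" unfolding dRR_eq using Npos by (simp add: abs_minus_commute)
    also have "\<dots> \<le> 2 * L * p / (N * (N - 1))" using h Npos by (intro divide_right_mono) auto
    also have "\<dots> = 2 * L * (L - 1) / N" using N2 by (simp add: field_simps p_def)
    finally show ?thesis .
  qed
  show ?thesis
  proof (rule exI[of _ dN], intro conjI impI)
    show "Lam f l x n \<epsilon> = real n / (real n - 1) * (corr_sum f l x n \<epsilon> - corr_sum f (l + 1) x n \<epsilon>) + dN"
      by (simp add: dN_def N_def)
    show "\<bar>dN\<bar> \<le> 2 * real l / real n" using dNb by (simp add: L_def N_def)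
    show "\<exists>\<delta>RR. \<bar>\<delta>RR\<bar> \<le> 2 * real l * (real l - 1) / real n
                   \<and> avg_len f l x n \<epsilon> =
                      (real n / (real n - 1) * (real l * corr_sum f l x n \<epsilon>
                           - (real l - 1) * corr_sum f (l + 1) x n \<epsilon>)
                        - 1 / (real n - 1) + \<delta>RR)
                      / (real n / (real n - 1) * (corr_sum f l x n \<epsilon> - corr_sum f (l + 1) x n \<epsilon>)
                        + dN)"
    proof (rule exI[of _ dRR], intro conjI)
      show "\<bar>dRR\<bar> \<le> 2 * real l * (real l - 1) / real n" using dRRb by (simp add: L_def N_def)
      show "avg_len f l x n \<epsilon> =
                      (real n / (real n - 1) * (real l * corr_sum f l x n \<epsilon>
                           - (real l - 1) * corr_sum f (l + 1) x n \<epsilon>)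
                        - 1 / (real n - 1) + dRR)
                      / (real n / (real n - 1) * (corr_sum f l x n \<epsilon> - corr_sum f (l + 1) x n \<epsilon>)
                        + dN)"
        by (simp add: avg_len_def dRR_def dN_def N_def L_def)
    qed
  qed
qed

end
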